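(* Fix $\mu>0$. As $D\to\infty$ through odd integers, the probability mass function of $\mathrm{MedPois}_\mu^{(D)}$ converges pointwise on $\mathbb{N}_0$ to one of the following: (i) a point mass $\delta_m$ with $m\in\{\lfloor\mu\rfloor,\lceil\mu\rceil\}$; or (ii) the discrete uniform distribution on two consecutive integers $\{m,m+1\}$ with $\{m,m+1\}\cap\{\lfloor\mu\rfloor,\lceil\mu\rceil\}\neq\emptyset$.
   Context: For odd $D$, $\mathrm{MedPois}_\mu^{(D)}$ is the law of the sample median, i.e. the $\lceil D/2\rceil$-th smallest, of $D$ i.i.d. Poisson($\mu$) random variables. *)

theory Defs
  imports "HOL-Probability.Probability"
begin

text \<open>Sample median of a list of odd length D: the ceil(D/2)-th smallest entry
  (1-indexed), i.e. index D div 2 (0-indexed) of the sorted list.\<close>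
definition sample_median :: "nat list \<Rightarrow> nat" where
  "sample_median xs = sort xs ! (length xs div 2)"

definition MedPois :: "real \<Rightarrow> nat \<Rightarrow> nat pmf" where
  "MedPois mu D = map_pmf sample_median (replicate_pmf D (poisson_pmf mu))"

end

theory Submission
  imports Defs "HOL-Real_Asymp.Real_Asymp"
begin


definition Fs :: "real \<Rightarrow> nat \<Rightarrow> real" where
  "Fs s k = (\<Sum>j\<le>k. exp (-s) * s ^ j / fact j)"

lemma deriv_Fs: "((\<lambda>s. Fs s k) has_real_derivative -(exp (-s) * s ^ k / fact k)) (at s)"
proof (induction k)
  case 0
  show ?case unfolding Fs_def by (auto intro!: derivative_eq_intros)
next
  case (Suc k)
  have e: "(\<lambda>s. Fs s (Suc k)) = (\<lambda>s. Fs s k + exp (-s) * s ^ Suc k / fact (Suc k))"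
    by (simp add: Fs_def)
  have d: "((\<lambda>s. exp (-s) * s ^ Suc k / fact (Suc k)) has_real_derivative
     (- exp (-s) * s ^ Suc k + exp (-s) * (real (Suc k) * s ^ k)) / fact (Suc k)) (at s)"
  proof -
    have P: "((\<lambda>s. s ^ Suc k) has_real_derivative real (Suc k) * s ^ k) (at s)"
      using DERIV_pow[of "Suc k" s] by simp
    have E: "((\<lambda>s. exp (-s)) has_real_derivative - exp (-s)) (at s)"
      by (auto intro!: derivative_eq_intros)
    have "((\<lambda>s. exp (-s) * s ^ Suc k) has_real_derivative - exp (-s) * s ^ Suc k + exp (-s) * (real (Suc k) * s ^ k)) (at s)"
      using DERIV_mult[OF E P] by (simp add: algebra_simps)
    from DERIV_cdivide[OF this, of "fact (Suc k)"] show ?thesis by simp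
  qed
  have "-(exp (-s) * s ^ k / fact k) + (- exp (-s) * s ^ Suc k + exp (-s) * (real (Suc k) * s ^ k)) / fact (Suc k)
      = -(exp (-s) * s ^ Suc k / fact (Suc k))"
  proof -
    have "exp (-s) * (real (Suc k) * s ^ k) / fact (Suc k) = exp (-s) * s ^ k / fact k"
      by (simp add: fact_Suc divide_simps)
    moreover have "(- exp (-s) * s ^ Suc k + exp (-s) * (real (Suc k) * s ^ k)) / fact (Suc k) = -(exp (-s) * s ^ Suc k / fact (Suc k)) + exp (-s) * (real (Suc k) * s ^ k) / fact (Suc k)"
      by (subst add_divide_distrib) simp
    ultimately show ?thesis by linarith
  qed
  then show ?case unfolding e using DERIV_add[OF Suc d] by simp
qed

lemma Fs_antimono: "0 \<le> a \<Longrightarrow> a \<le> b \<Longrightarrow> Fs b k \<le> Fs a k"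
  by (rule deriv_nonpos_imp_antimono[OF deriv_Fs]) auto

lemma Fs_0: "Fs 0 k = 1"
  unfolding Fs_def by (induction k) auto

lemma Fs_le1: "s \<ge> 0 \<Longrightarrow> Fs s k \<le> 1"
  using Fs_antimono[of 0 s k] Fs_0 by simp

lemma Fs_nonneg: "s \<ge> 0 \<Longrightarrow> Fs s k \<ge> 0"
  unfolding Fs_def by (intro sum_nonneg) auto

lemma log_ineq:
  fixes N x :: real
  assumes N: "N > 0" and x: "0 \<le> x" "x < N"
  shows "2 * x \<le> N * (ln (N + x) - ln (N - x))"
proof -
  define phi where "phi = (\<lambda>t. N * (ln (N + t) - ln (N - t)) - 2 * t)"
  have "phi 0 \<le> phi x"
  proof (rule deriv_nonneg_imp_mono[where g = phi and g' = "\<lambda>t. N * (1 / (N + t) + 1 / (N - t)) - 2"])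
    fix t assume t: "t \<in> {0..x}"
    then have "N + t > 0" "N - t > 0" using x N by auto
    have pos: "N * N - t * t > 0" using \<open>N + t > 0\<close> \<open>N - t > 0\<close>
        by (metis mult_pos_pos square_diff_square_factored mult.commute)
    show "(phi has_real_derivative N * (1 / (N + t) + 1 / (N - t)) - 2) (at t)"
      unfolding phi_def using \<open>N + t > 0\<close> \<open>N - t > 0\<close> pos
      by (auto intro!: derivative_eq_intros simp: field_simps)
    have "N * (1 / (N + t) + 1 / (N - t)) - 2 = 2 * t * t / ((N + t) * (N - t))"
    proof -
      have "N * N - t * t > 0" using \<open>N + t > 0\<close> \<open>N - t > 0\<close>
        by (metis mult_pos_pos square_diff_square_factored mult.commute)
      then show ?thesis using \<open>N + t > 0\<close> \<open>N - t > 0\<close>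
        by (simp add: field_simps)
    qed
    also have "\<dots> \<ge> 0" using t \<open>N + t > 0\<close> \<open>N - t > 0\<close> by auto
    finally show "N * (1 / (N + t) + 1 / (N - t)) - 2 \<ge> 0" .
  qed (use x in auto)
  then show ?thesis unfolding phi_def by simp
qed

lemma g_ineq:
  fixes x :: real and n :: nat
  assumes n: "n \<ge> 1" and x: "0 \<le> x" "x \<le> real n"
  shows "exp (-(real n - x)) * (real n - x) ^ n \<le> exp (-(real n + x)) * (real n + x) ^ n"
proof (cases "x = real n")
  case True then show ?thesis using n by (auto simp: power_0_left)
next
  case False
  define N where "N = real n"
  have N: "N > 0" using n by (simp add: N_def)
  have xl: "x < N" using x False by (simp add: N_def)
  have "2 * x \<le> N * (ln (N + x) - ln (N - x))" using log_ineq[OF N x(1) xl] .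
  then have "exp (2 * x) \<le> exp (N * (ln (N + x) - ln (N - x)))" by simp
  also have "\<dots> = exp (ln (N + x) - ln (N - x)) ^ n" unfolding N_def by (rule exp_of_nat_mult)
  also have "exp (ln (N + x) - ln (N - x)) = (N + x) / (N - x)"
    using N x xl by (simp add: exp_diff)
  finally have "exp (2 * x) \<le> ((N + x) / (N - x)) ^ n" .
  then have "exp (2 * x) * (N - x) ^ n \<le> (N + x) ^ n"
    using xl by (simp add: power_divide pos_le_divide_eq)
  then have "exp (-(N + x)) * (exp (2 * x) * (N - x) ^ n) \<le> exp (-(N + x)) * (N + x) ^ n"
    by (intro mult_left_mono) auto
  moreover have "exp (-(N + x)) * exp (2 * x) = exp (-(N - x))"
    by (simp add: exp_add[symmetric])
  ultimately have "exp (-(N - x)) * (N - x) ^ n \<le> exp (-(N + x)) * (N + x) ^ n"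
    by (metis mult.assoc)
  then show ?thesis unfolding N_def .
qed

lemma Fs_half_upper:
  fixes n :: nat assumes n: "n \<ge> 1"
  shows "Fs (real n) n \<ge> 1 / 2"
proof -
  define N where "N = real n"
  define H where "H = (\<lambda>x. 2 * Fs N n - Fs (N + x) n - Fs (N - x) n)"
  define g where "g = (\<lambda>s::real. exp (-s) * s ^ n / fact n)"
  have "H 0 \<le> H N"
  proof (rule deriv_nonneg_imp_mono[where g = H and g' = "\<lambda>x. g (N + x) - g (N - x)"])
    fix x assume x: "x \<in> {0..N}"
    have d1: "((\<lambda>x. Fs (N + x) n) has_real_derivative -(g (N + x)) * 1) (at x)"
      unfolding g_def by (rule DERIV_chain2[OF deriv_Fs]) (auto intro!: derivative_eq_intros)
    have d2: "((\<lambda>x. Fs (N - x) n) has_real_derivative -(g (N - x)) * (-1)) (at x)"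
      unfolding g_def by (rule DERIV_chain2[OF deriv_Fs]) (auto intro!: derivative_eq_intros)
    show "(H has_real_derivative g (N + x) - g (N - x)) (at x)"
      unfolding H_def using DERIV_diff[OF DERIV_diff[OF DERIV_const d1] d2] by simp
    have "exp (-(N - x)) * (N - x) ^ n \<le> exp (-(N + x)) * (N + x) ^ n"
      using g_ineq[OF n, of x] x unfolding N_def by auto
    then show "g (N + x) - g (N - x) \<ge> 0" unfolding g_def
      by (simp add: divide_right_mono)
  qed (simp add: N_def)
  moreover have "H 0 = 0" by (simp add: H_def)
  moreover have "H N = 2 * Fs N n - Fs (2 * N) n - 1" by (simp add: H_def Fs_0)
  moreover have "Fs (2 * N) n \<ge> 0" by (rule Fs_nonneg) (simp add: N_def)
  ultimately show ?thesis unfolding N_def by linarith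
qed

lemma fact_pair: "j < n \<Longrightarrow> fact (n + j) \<le> (n ^ (2 * j + 1) * fact (n - 1 - j) :: nat)"
proof (induction j)
  case 0
  then show ?case by (cases n) auto
next
  case (Suc j)
  then have IH: "fact (n + j) \<le> (n ^ (2 * j + 1) * fact (n - 1 - j) :: nat)" by simp
  have f: "fact (n - 1 - j) = (n - 1 - j) * (fact (n - 1 - Suc j) :: nat)"
  proof -
    have h: "n - 1 - j = Suc (n - 1 - Suc j)" using Suc.prems by simp
    have "fact (n - 1 - j) = (fact (Suc (n - 1 - Suc j)) :: nat)" using h by simp
    also have "\<dots> = Suc (n - 1 - Suc j) * fact (n - 1 - Suc j)" by simp
    finally show ?thesis using h by simp
  qed
  have sq: "(n + Suc j) * (n - 1 - j) \<le> n * n"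
  proof -
    have "int ((n + Suc j) * (n - 1 - j)) = (int n + int j + 1) * (int n - int j - 1)"
    proof -
      have a: "int (n - 1 - j) = int n - int j - 1" using Suc.prems by linarith
      show ?thesis unfolding of_nat_mult a by simp
    qed
    also have "\<dots> = int n * int n - (int j + 1) ^ 2" by (simp add: algebra_simps power2_eq_square)
    also have "\<dots> \<le> int (n * n)" by simp
    finally show ?thesis by linarith
  qed
  have "fact (n + Suc j) = (n + Suc j) * (fact (n + j) :: nat)" by simp
  also have "\<dots> \<le> (n + Suc j) * (n ^ (2 * j + 1) * fact (n - 1 - j))"
    using IH by (intro mult_left_mono) auto
  also have "\<dots> = ((n + Suc j) * (n - 1 - j)) * n ^ (2 * j + 1) * fact (n - 1 - Suc j)"
    unfolding f by (simp only: ac_simps)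
  also have "\<dots> \<le> (n * n) * n ^ (2 * j + 1) * fact (n - 1 - Suc j)"
    using sq by (intro mult_right_mono) auto
  also have "\<dots> = n ^ (2 * Suc j + 1) * fact (n - 1 - Suc j)"
    by (simp add: power2_eq_square algebra_simps)
  finally show ?case .
qed

lemma frac_le_aux: "0 < (b::real) \<Longrightarrow> 0 < d \<Longrightarrow> a * d \<le> b * c \<Longrightarrow> a / b \<le> c / d"
  by (simp add: divide_simps mult.commute)

lemma sum_split_nat: "(\<Sum>k<n + m. f k) = (\<Sum>k<n. f k) + (\<Sum>j<m. f (n + j :: nat)) "
  by (induction m) (auto simp: add.assoc)

lemma sum_reflect_nat: "(\<Sum>k<n. f k) = (\<Sum>j<n. f (n - 1 - j :: nat))"
  by (rule sum.reindex_bij_witness[of _ "\<lambda>j. n - 1 - j" "\<lambda>j. n - 1 - j"]) auto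

lemma Fs_half_lower:
  fixes n :: nat assumes n: "n \<ge> 1"
  shows "Fs (real n) (n - 1) \<le> 1 / 2"
proof -
  define N where "N = real n"
  define p where "p = (\<lambda>k. exp (-N) * N ^ k / fact k)"
  have N: "N > 0" using n by (simp add: N_def)
  have pair: "p (n - 1 - j) \<le> p (n + j)" if j: "j < n" for j
  proof -
    have "real (fact (n + j)) \<le> real (n ^ (2 * j + 1) * fact (n - 1 - j))"
      using fact_pair[OF j] by linarith
    then have A: "fact (n + j) \<le> N ^ (2 * j + 1) * fact (n - 1 - j)"
      by (simp add: N_def)
    have e: "N ^ (n + j) = N ^ (n - 1 - j) * N ^ (2 * j + 1)"
    proof -
      have "n + j = (n - 1 - j) + (2 * j + 1)" using j by simp
      then show ?thesis by (metis power_add)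
    qed
    have "N ^ (n - 1 - j) * fact (n + j) \<le> N ^ (n - 1 - j) * (N ^ (2 * j + 1) * fact (n - 1 - j))"
      using A N by (intro mult_left_mono) auto
    then have "N ^ (n - 1 - j) / fact (n - 1 - j) \<le> N ^ (n + j) / fact (n + j)"
      unfolding e by (intro frac_le_aux) (auto simp: algebra_simps)
    then show ?thesis unfolding p_def by (simp add: divide_simps)
  qed
  have "Fs N (n - 1) = (\<Sum>k<n. p k)"
    unfolding Fs_def p_def using n by (intro sum.cong) auto
  also have "\<dots> = (\<Sum>j<n. p (n - 1 - j))" by (rule sum_reflect_nat)
  also have "\<dots> \<le> (\<Sum>j<n. p (n + j))" by (intro sum_mono pair) auto
  finally have 1: "Fs N (n - 1) \<le> (\<Sum>j<n. p (n + j))" .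
  have "Fs N (n - 1) + (\<Sum>j<n. p (n + j)) = (\<Sum>k<n + n. p k)"
    unfolding sum_split_nat \<open>Fs N (n - 1) = (\<Sum>k<n. p k)\<close> ..
  also have "\<dots> = Fs N (2 * n - 1)"
    unfolding Fs_def p_def using n by (intro sum.cong) auto
  also have "\<dots> \<le> 1" by (rule Fs_le1) (use N in simp)
  finally show ?thesis using 1 unfolding N_def by linarith
qed



lemma sorted_nth_le:
  "sorted ys \<Longrightarrow> i < length ys \<Longrightarrow> (ys ! i \<le> (k::nat)) \<longleftrightarrow> i < length (filter (\<lambda>x. x \<le> k) ys)"
proof (induction ys arbitrary: i)
  case Nil then show ?case by simp
next
  case (Cons a zs)
  have az: "\<forall>z\<in>set zs. a \<le> z" using Cons.prems(1) by simp
  show ?case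
  proof (cases "a \<le> k")
    case True
    then show ?thesis using Cons by (cases i) auto
  next
    case False
    then have "filter (\<lambda>x. x \<le> k) zs = []" using az by (auto simp: filter_empty_conv)
    moreover have "(a # zs) ! i > k" using False az Cons.prems(2)
      by (cases i) (auto, metis le_less_trans not_le nth_mem)
    ultimately show ?thesis using False by simp
  qed
qed

lemma med_le:
  assumes "length xs = 2 * n + 1"
  shows "(sample_median xs \<le> k) \<longleftrightarrow> n + 1 \<le> length (filter (\<lambda>x. x \<le> k) xs)"
proof -
  have "length (filter (\<lambda>x. x \<le> k) (sort xs)) = length (filter (\<lambda>x. x \<le> k) xs)"
    by (metis mset_filter mset_sort size_mset)
  then show ?thesis unfolding sample_median_def using assms sorted_nth_le[of "sort xs" n k]
    by (simp add: Suc_le_eq)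
qed

lemma map_replicate_pmf: "map_pmf (map f) (replicate_pmf m p) = replicate_pmf m (map_pmf f p)"
proof (induction m)
  case 0 show ?case by simp
next
  case (Suc m)
  have "map_pmf (map f) (replicate_pmf (Suc m) p) = bind_pmf p (\<lambda>x. map_pmf (\<lambda>xs. f x # map f xs) (replicate_pmf m p))"
    by (simp add: map_pmf_def bind_assoc_pmf bind_return_pmf)
  also have "\<dots> = bind_pmf p (\<lambda>x. map_pmf ((#) (f x)) (replicate_pmf m (map_pmf f p)))"
    by (simp add: Suc.IH[symmetric] pmf.map_comp o_def)
  also have "\<dots> = replicate_pmf (Suc m) (map_pmf f p)"
    by (simp add: map_pmf_def bind_assoc_pmf bind_return_pmf)
  finally show ?case .
qed

lemma map_pmf_bool: "map_pmf P p = bernoulli_pmf (measure_pmf.prob p {x. P x})"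
proof (rule pmf_eqI)
  fix i show "pmf (map_pmf P p) i = pmf (bernoulli_pmf (measure_pmf.prob p {x. P x})) i"
  proof (cases i)
    case True then show ?thesis by (simp add: pmf_map vimage_def)
  next
    case False
    have "UNIV - {x. P x} = {x. \<not> P x}" by auto
    then have "measure_pmf.prob p {x. \<not> P x} = 1 - measure_pmf.prob p {x. P x}"
      using measure_pmf.prob_compl[of "{x. P x}" p] by simp
    then show ?thesis using False by (simp add: pmf_map vimage_def)
  qed
qed

lemma cdf_med:
  "measure_pmf.prob (MedPois mu (2 * n + 1)) {..k} =
   measure_pmf.prob (binomial_pmf (2 * n + 1) (measure_pmf.prob (poisson_pmf mu) {..k})) {n+1..}"
proof -
  define R where "R = replicate_pmf (2 * n + 1) (poisson_pmf mu)"
  define q where "q = measure_pmf.prob (poisson_pmf mu) {..k}"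
  define cnt where "cnt = (\<lambda>xs. length (filter (\<lambda>x. x \<le> k) xs))"
  have q: "q \<in> {0..1}" by (auto simp: q_def)
  have "measure_pmf.prob (MedPois mu (2 * n + 1)) {..k} = measure_pmf.prob (map_pmf (\<lambda>xs. sample_median xs \<le> k) R) {True}"
    by (simp add: MedPois_def R_def vimage_def)
  also have "map_pmf (\<lambda>xs. sample_median xs \<le> k) R = map_pmf (\<lambda>xs. n + 1 \<le> cnt xs) R"
    by (intro map_pmf_cong refl) (auto simp: R_def set_replicate_pmf cnt_def med_le)
  also have "measure_pmf.prob \<dots> {True} = measure_pmf.prob (map_pmf cnt R) {n+1..}"
    by (simp add: vimage_def)
  also have "map_pmf cnt R = binomial_pmf (2 * n + 1) q"
  proof -
    have "binomial_pmf (2 * n + 1) q = map_pmf (length \<circ> filter id) (replicate_pmf (2 * n + 1) (bernoulli_pmf q))"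
      by (rule binomial_pmf_altdef[OF q])
    also have "bernoulli_pmf q = map_pmf (\<lambda>x. x \<le> k) (poisson_pmf mu)"
      by (simp add: map_pmf_bool q_def atMost_def)
    also have "replicate_pmf (2 * n + 1) \<dots> = map_pmf (map (\<lambda>x. x \<le> k)) R"
      by (simp only: map_replicate_pmf R_def)
    also have "map_pmf (length \<circ> filter id) \<dots> = map_pmf cnt R"
      by (simp add: pmf.map_comp cnt_def o_def filter_map)
    finally show ?thesis by simp
  qed
  finally show ?thesis by (simp add: q_def)
qed



definition T :: "nat \<Rightarrow> real \<Rightarrow> real" where
  "T n q = measure_pmf.prob (binomial_pmf (2 * n + 1) q) {n+1..}"

lemma T_compl: "q \<in> {0..1} \<Longrightarrow> T n q = 1 - measure_pmf.prob (binomial_pmf (2 * n + 1) q) {..n}"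
proof -
  have "UNIV - {..n} = {n+1..}" by auto
  then show "T n q = 1 - measure_pmf.prob (binomial_pmf (2 * n + 1) q) {..n}"
    unfolding T_def using measure_pmf.prob_compl[of "{..n}" "binomial_pmf (2 * n + 1) q"] by simp
qed

lemma T_low:
  assumes q: "q \<in> {0..1}" "q < 1/2"
  shows "(\<lambda>n. T n q) \<longlonglongrightarrow> 0"
proof (rule tendsto_sandwich[of "\<lambda>_. 0" _ _ "\<lambda>n. exp (-2 * real (2 * n + 1) * (1/2 - q)\<^sup>2)"])
  have bd: "binomial_distribution q" using q by unfold_locales
  show "\<forall>\<^sub>F n in sequentially. T n q \<le> exp (-2 * real (2 * n + 1) * (1/2 - q)\<^sup>2)"
  proof (intro always_eventually allI)
    fix n
    have "T n q \<le> measure_pmf.prob (binomial_pmf (2 * n + 1) q) {x. real x / real (2 * n + 1) \<ge> q + (1/2 - q)}"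
    proof -
      have "{n+1..} \<subseteq> {x. q + (1/2 - q) \<le> real x / real (2 * n + 1)}"
      proof
        fix x assume "x \<in> {n+1..}"
        then have "real x \<ge> real n + 1" by auto
        then show "x \<in> {x. q + (1/2 - q) \<le> real x / real (2 * n + 1)}"
          by (simp add: le_divide_eq)
      qed
      then show ?thesis unfolding T_def by (rule measure_pmf.finite_measure_mono) simp
    qed
    also have "\<dots> \<le> exp (-2 * real (2 * n + 1) * (1/2 - q)\<^sup>2)"
      using binomial_distribution.prob_ge'[OF bd, of "2*n+1" "1/2-q"] q by simp
    finally show "T n q \<le> exp (-2 * real (2 * n + 1) * (1/2 - q)\<^sup>2)" .
  qed
  show "\<forall>\<^sub>F n in sequentially. 0 \<le> T n q" by (simp add: T_def)
  show "(\<lambda>n. exp (-2 * real (2 * n + 1) * (1/2 - q)\<^sup>2)) \<longlonglongrightarrow> 0"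
    using q by real_asymp
qed simp

lemma T_high:
  assumes q: "q \<in> {0..1}" "q > 1/2"
  shows "(\<lambda>n. T n q) \<longlonglongrightarrow> 1"
proof -
  define S where "S = (\<lambda>n. measure_pmf.prob (binomial_pmf (2 * n + 1) q) {..n})"
  have "S \<longlonglongrightarrow> 0"
  proof (rule tendsto_sandwich[of "\<lambda>_. 0" _ _ "\<lambda>n. exp (-2 * real (2 * n + 1) * (q - 1/2)\<^sup>2)"])
    have bd: "binomial_distribution q" using q by unfold_locales
    show "\<forall>\<^sub>F n in sequentially. S n \<le> exp (-2 * real (2 * n + 1) * (q - 1/2)\<^sup>2)"
    proof (intro always_eventually allI)
      fix n
      have "S n \<le> measure_pmf.prob (binomial_pmf (2 * n + 1) q) {x. real x / real (2 * n + 1) \<le> q - (q - 1/2)}"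
      proof -
        have "{..n} \<subseteq> {x. real x / real (2 * n + 1) \<le> q - (q - 1/2)}"
        proof
          fix x assume "x \<in> {..n}"
          then have "real x \<le> real n" by auto
          then show "x \<in> {x. real x / real (2 * n + 1) \<le> q - (q - 1/2)}"
            by (simp add: divide_le_eq)
        qed
        then show ?thesis unfolding S_def by (rule measure_pmf.finite_measure_mono) simp
      qed
      also have "\<dots> \<le> exp (-2 * real (2 * n + 1) * (q - 1/2)\<^sup>2)"
        using binomial_distribution.prob_le'[OF bd, of "2*n+1" "q-1/2"] q by simp
      finally show "S n \<le> exp (-2 * real (2 * n + 1) * (q - 1/2)\<^sup>2)" .
    qed
    show "\<forall>\<^sub>F n in sequentially. 0 \<le> S n" by (simp add: S_def)
    show "(\<lambda>n. exp (-2 * real (2 * n + 1) * (q - 1/2)\<^sup>2)) \<longlonglongrightarrow> 0"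
      using q by real_asymp
  qed simp
  then have "(\<lambda>n. 1 - S n) \<longlonglongrightarrow> 1 - 0" by (intro tendsto_intros)
  then show ?thesis using T_compl[OF q(1)] by (simp add: S_def)
qed

lemma T_half: "T n (1/2) = 1/2"
proof -
  define N where "N = 2 * n + 1"
  define B where "B = binomial_pmf N (1/2)"
  have sB: "set_pmf B = {..N}" by (simp add: B_def)
  have sym: "pmf B k = pmf B (N - k)" if "k \<le> N" for k
    using that by (simp add: B_def binomial_symmetric[symmetric] power_add[symmetric])
  have sym2: "pmf B (N - k) = pmf B k" if "k \<le> N" for k
    using sym[of k] that by simp
  have sym3: "pmf B (Suc (2 * n) - k) = pmf B k" if "k \<le> Suc (2 * n)" for k
    using sym2[of k] that by (simp add: N_def)
  have "measure_pmf.prob B {n+1..} = measure_pmf.prob B ({n+1..} \<inter> set_pmf B)"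
    by (simp add: measure_Int_set_pmf)
  also have "{n+1..} \<inter> set_pmf B = {n+1..N}" by (auto simp: sB)
  also have "measure_pmf.prob B {n+1..N} = (\<Sum>k\<in>{n+1..N}. pmf B k)"
    by (simp add: measure_measure_pmf_finite)
  also have "\<dots> = (\<Sum>k\<in>{..n}. pmf B k)"
    by (rule sum.reindex_bij_witness[of _ "\<lambda>k. N - k" "\<lambda>k. N - k"]) (auto simp: N_def sym3)
  also have "\<dots> = measure_pmf.prob B {..n}" by (simp add: measure_measure_pmf_finite)
  finally have e: "measure_pmf.prob B {n+1..} = measure_pmf.prob B {..n}" .
  have "T n (1/2) = 1 - measure_pmf.prob B {..n}" unfolding B_def N_def by (rule T_compl) simp
  moreover have "T n (1/2) = measure_pmf.prob B {..n}" using e by (simp add: T_def B_def N_def)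
  ultimately show ?thesis by linarith
qed



lemma Fpois: "mu > 0 \<Longrightarrow> measure_pmf.prob (poisson_pmf mu) {..k} = Fs mu k"
  unfolding Fs_def by (simp add: measure_measure_pmf_finite algebra_simps)

definition L :: "real \<Rightarrow> real" where
  "L q = (if q > 1/2 then 1 else if q = 1/2 then 1/2 else 0)"

lemma T_lim: "q \<in> {0..1} \<Longrightarrow> (\<lambda>n. T n q) \<longlonglongrightarrow> L q"
proof -
  assume q: "q \<in> {0..1}"
  consider "q > 1/2" | "q = 1/2" | "q < 1/2" by linarith
  then show ?thesis
  proof cases
    case 1 then show ?thesis using T_high[OF q] by (simp add: L_def)
  next
    case 2 show ?thesis unfolding 2 L_def by (simp add: T_half)
  next
    case 3 then show ?thesis using T_low[OF q] by (simp add: L_def)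
  qed
qed

lemma pmf_cdf: fixes M :: "nat pmf" shows "pmf M k = measure_pmf.prob M {..k} - (if k = 0 then 0 else measure_pmf.prob M {..k-1})"
proof (cases k)
  case 0
  then show ?thesis by (simp add: measure_pmf_single)
next
  case (Suc j)
  then show ?thesis by (simp add: measure_measure_pmf_finite)
qed

lemma Fs_Suc: "Fs mu (Suc k) = Fs mu k + exp (-mu) * mu ^ Suc k / fact (Suc k)"
  by (simp add: Fs_def)

lemma Fs_strict: assumes "mu > 0" shows "k < j \<Longrightarrow> Fs mu k < Fs mu j"
proof -
  have "Fs mu k < Fs mu (Suc k)" for k using assms by (simp add: Fs_Suc)
  then have "strict_mono (Fs mu)" by (rule strict_monoI_Suc)
  then show "k < j \<Longrightarrow> Fs mu k < Fs mu j" by (simp add: strict_mono_def)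
qed

lemma Fs_mono': "mu > 0 \<Longrightarrow> k \<le> j \<Longrightarrow> Fs mu k \<le> Fs mu j"
  using Fs_strict[of mu k j] by (cases "k = j") auto

lemma ceilF: assumes "mu > 0" shows "Fs mu (nat \<lceil>mu\<rceil>) \<ge> 1/2"
proof -
  define c where "c = nat \<lceil>mu\<rceil>"
  have "\<lceil>mu\<rceil> > 0" using assms by simp
  then have c1: "c \<ge> 1" by (simp add: c_def le_nat_iff)
  have "mu \<le> real c" unfolding c_def by linarith
  then have "Fs (real c) c \<le> Fs mu c" using assms by (intro Fs_antimono) auto
  with Fs_half_upper[OF c1] show ?thesis unfolding c_def by linarith
qed

lemma floorF: assumes "mu > 0" "nat \<lfloor>mu\<rfloor> \<ge> 1" shows "Fs mu (nat \<lfloor>mu\<rfloor> - 1) \<le> 1/2"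
proof -
  define f where "f = nat \<lfloor>mu\<rfloor>"
  have f1: "f \<ge> 1" using assms by (simp add: f_def)
  have "real f \<le> mu" unfolding f_def using assms by linarith
  then have "Fs mu (f - 1) \<le> Fs (real f) (f - 1)" by (intro Fs_antimono) auto
  with Fs_half_lower[OF f1] show ?thesis unfolding f_def by linarith
qed

theorem mainTheorem4:
  fixes mu :: real
  assumes "mu > 0"
  shows "\<exists>q :: nat \<Rightarrow> real.
           (\<forall>k. (\<lambda>n. pmf (MedPois mu (2 * n + 1)) k) \<longlonglongrightarrow> q k) \<and>
           ((\<exists>m. m \<in> {nat \<lfloor>mu\<rfloor>, nat \<lceil>mu\<rceil>} \<and> q = (\<lambda>k. if k = m then 1 else 0)) \<or>
            (\<exists>m. {m, m + 1} \<inter> {nat \<lfloor>mu\<rfloor>, nat \<lceil>mu\<rceil>} \<noteq> {} \<and>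
                 q = (\<lambda>k. if k \<in> {m, m + 1} then 1 / 2 else 0)))"
proof -
  define F where "F = Fs mu"
  define Q where "Q = (\<lambda>k. L (F k) - (if k = 0 then 0 else L (F (k - 1))))"
  have F01: "F k \<in> {0..1}" for k using assms Fs_nonneg Fs_le1 unfolding F_def by auto
  have cdf: "(\<lambda>n. measure_pmf.prob (MedPois mu (2 * n + 1)) {..k}) \<longlonglongrightarrow> L (F k)" for k
  proof -
    have "(\<lambda>n. T n (F k)) \<longlonglongrightarrow> L (F k)" by (rule T_lim[OF F01])
    moreover have "measure_pmf.prob (MedPois mu (2 * n + 1)) {..k} = T n (F k)" for n
      by (simp only: cdf_med T_def Fpois[OF assms] F_def)
    ultimately show ?thesis by simp
  qed
  have conv: "(\<lambda>n. pmf (MedPois mu (2 * n + 1)) k) \<longlonglongrightarrow> Q k" for k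
  proof (cases "k = 0")
    case True then show ?thesis unfolding Q_def using cdf[of 0] by (subst pmf_cdf) simp
  next
    case False then show ?thesis unfolding Q_def using tendsto_diff[OF cdf[of k] cdf[of "k-1"]]
      by (subst pmf_cdf) simp
  qed
  define fl where "fl = nat \<lfloor>mu\<rfloor>"
  define c where "c = nat \<lceil>mu\<rceil>"
  have cfl: "c \<le> fl + 1" unfolding c_def fl_def by linarith
  have Fc: "F c \<ge> 1/2" using ceilF[OF assms] by (simp add: F_def c_def)
  have Ffl: "fl \<ge> 1 \<Longrightarrow> F (fl - 1) \<le> 1/2" using floorF[OF assms] by (simp add: F_def fl_def)
  have Fst: "k < j \<Longrightarrow> F k < F j" for k j using Fs_strict[OF assms] by (simp add: F_def)
  define m where "m = (LEAST k. F k \<ge> 1/2)"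
  have mc: "m \<le> c" unfolding m_def using Fc by (rule Least_le)
  have Fm: "F m \<ge> 1/2" unfolding m_def using Fc by (rule LeastI)
  have below: "k < m \<Longrightarrow> F k < 1/2" for k unfolding m_def using not_less_Least by force
  show ?thesis
  proof (intro exI conjI)
    show "\<forall>k. (\<lambda>n. pmf (MedPois mu (2 * n + 1)) k) \<longlonglongrightarrow> Q k" using conv by blast
  next
    show "(\<exists>m. m \<in> {nat \<lfloor>mu\<rfloor>, nat \<lceil>mu\<rceil>} \<and> Q = (\<lambda>k. if k = m then 1 else 0)) \<or>
            (\<exists>m. {m, m + 1} \<inter> {nat \<lfloor>mu\<rfloor>, nat \<lceil>mu\<rceil>} \<noteq> {} \<and>
                 Q = (\<lambda>k. if k \<in> {m, m + 1} then 1 / 2 else 0))"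
    proof (cases "F m > 1/2")
      case True
      have LF: "L (F k) = (if m \<le> k then 1 else 0)" for k
      proof (cases "m \<le> k")
        case True
        then have "F k \<ge> F m" using Fst[of m k] by (cases "m = k") auto
        then show ?thesis using \<open>F m > 1/2\<close> True by (simp add: L_def)
      next
        case False
        then show ?thesis using below[of k] by (simp add: L_def)
      qed
      have "Q = (\<lambda>k. if k = m then 1 else 0)"
        unfolding Q_def LF by (auto simp: fun_eq_iff)
      moreover have "m \<in> {fl, c}"
      proof -
        have "fl \<le> m"
        proof (rule ccontr)
          assume "\<not> fl \<le> m"
          then have "m \<le> fl - 1" "fl \<ge> 1" by auto
          then have "F m \<le> F (fl - 1)" using Fst[of m "fl - 1"] by (cases "m = fl - 1") auto
          with Ffl \<open>fl \<ge> 1\<close> True show False by linarith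
        qed
        with mc cfl show ?thesis by auto
      qed
      ultimately show ?thesis unfolding fl_def c_def by blast
    next
      case False
      then have Fmh: "F m = 1/2" using Fm by linarith
      have LF: "L (F k) = (if k < m then 0 else if k = m then 1/2 else 1)" for k
      proof -
        consider "k < m" | "k = m" | "k > m" by linarith
        then show ?thesis
        proof cases
          case 1 then show ?thesis using below[of k] by (simp add: L_def)
        next
          case 2 then show ?thesis using Fmh by (simp add: L_def)
        next
          case 3 then show ?thesis using Fst[of m k] Fmh by (simp add: L_def)
        qed
      qed
      have "Q = (\<lambda>k. if k \<in> {m, m + 1} then 1 / 2 else 0)"
        unfolding Q_def LF by (auto simp: fun_eq_iff)
      moreover have "{m, m + 1} \<inter> {fl, c} \<noteq> {}"
      proof (cases "fl \<le> m")
        case True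
        with mc cfl show ?thesis by auto
      next
        case False
        then have fl1: "fl \<ge> 1" by auto
        have "m + 1 = fl"
        proof (rule ccontr)
          assume "m + 1 \<noteq> fl"
          with False have "m < fl - 1" by auto
          then have "F m < F (fl - 1)" by (rule Fst)
          with Ffl[OF fl1] Fmh show False by linarith
        qed
        then show ?thesis by auto
      qed
      ultimately show ?thesis unfolding fl_def c_def by blast
    qed
  qed
qed

end
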